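(* Let $k\ge1$, $\alpha\in\mathbb Z$ with $(\alpha,k)=1$, and $p_1,p_2,p_3\in\mathbb Z$. Then $$A(p_1,p_2,p_3;\alpha;k)=k\sum_{f\mid(p_2,p_3,k)}f\,S\Big(p_1\overline{\alpha},\frac{p_2p_3}{f^2};\frac kf\Big),$$ where $\overline\alpha$ denotes an inverse of $\alpha$ modulo $k/f$.
   Context: $A(p_1,p_2,p_3;\alpha;k)=\sum_{x_1,x_2,x_3\bmod k}e\big(\frac{x_1x_2x_3\alpha-x_1p_1-x_2p_2-x_3p_3}{k}\big)$, $e(x)=e^{2\pi ix}$; $S(a,b;c)=\sum_{u\bmod c,(u,c)=1}e\big(\frac{au+b\bar u}{c}\big)$ is the Kloosterman sum; $(p_2,p_3,k)$ is the gcd (with $(0,0,k)=k$). *)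

theory Defs
  imports "HOL-Analysis.Analysis" "HOL-Number_Theory.Number_Theory"
begin

definition e :: "real \<Rightarrow> complex" where
  "e x = cis (2 * pi * x)"

definition Asum :: "int \<Rightarrow> int \<Rightarrow> int \<Rightarrow> int \<Rightarrow> int \<Rightarrow> complex" where
  "Asum p1 p2 p3 \<alpha> k =
     (\<Sum>x1\<in>{0..<k}. \<Sum>x2\<in>{0..<k}. \<Sum>x3\<in>{0..<k}.
        e (of_int (x1 * x2 * x3 * \<alpha> - x1 * p1 - x2 * p2 - x3 * p3) / of_int k))"

definition kloosterman :: "int \<Rightarrow> int \<Rightarrow> int \<Rightarrow> complex" where
  "kloosterman a b c =
     (\<Sum>u\<in>{u\<in>{0..<c}. coprime u c}.
        e (of_int (a * u + b * (SOME v. [u * v = 1] (mod c))) / of_int c))"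

end

theory Submission
  imports Defs "HOL-Library.Real_Mod"
begin


definition ee :: "int \<Rightarrow> int \<Rightarrow> complex" where
  "ee a c = e (of_int a / of_int c)"

lemma e_int: "e (of_int m) = 1"
  unfolding e_def by (metis cis_multiple_2pi Ints_of_int)

lemma e_add: "e (x + y) = e x * e y"
  unfolding e_def by (simp add: cis_mult distrib_left)

lemma ee_add: "ee (a + b) c = ee a c * ee b c"
  unfolding ee_def by (simp add: add_divide_distrib e_add)

lemma ee_cong: assumes "[a = b] (mod c)" shows "ee a c = ee b c"
proof -
  obtain t where t: "b = a + c * t" using assms cong_iff_lin by blast
  show ?thesis
  proof (cases "c = 0")
    case True then show ?thesis using t by simp
  next
    case False
    have "of_int b / of_int c = of_int a / of_int c + (of_int t :: real)"
      using False t by (simp add: field_simps)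
    then show ?thesis unfolding ee_def by (simp add: e_add e_int)
  qed
qed

lemma ee_scale: assumes "d \<noteq> 0" shows "ee (d * m) (d * n) = ee m n"
  unfolding ee_def using assms by simp

lemma e_eq_1: "e x = 1 \<longleftrightarrow> x \<in> \<int>"
proof
  assume "e x = 1"
  then obtain n where "2 * pi * x = of_int n * (2 * pi)" unfolding e_def cis_eq_1_iff by blast
  then have "x = of_int n" by simp
  then show "x \<in> \<int>" by simp
next
  assume "x \<in> \<int>" then show "e x = 1" unfolding e_def by simp
qed

lemma ee_pow: "(ee a c) ^ m = ee (int m * a) c"
  unfolding ee_def e_def Complex.DeMoivre by (simp add: field_simps)

lemma geom: assumes "c \<ge> 1"
  shows "(\<Sum>x\<in>{0..<c}. ee (x * n) c) = (if c dvd n then of_int c else 0)"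
proof -
  have "(\<Sum>x\<in>{0..<c}. ee (x * n) c) = (\<Sum>m\<in>{0..<nat c}. ee (int m * n) c)"
  proof -
    have "{0..<c} = int ` {0..<nat c}" using assms by (simp add: image_int_atLeastLessThan)
    then show ?thesis by (simp add: sum.reindex)
  qed
  also have "\<dots> = (\<Sum>m<nat c. (ee n c) ^ m)" by (simp add: ee_pow lessThan_atLeast0)
  finally have S: "(\<Sum>x\<in>{0..<c}. ee (x * n) c) = (\<Sum>m<nat c. (ee n c) ^ m)" .
  show ?thesis
  proof (cases "c dvd n")
    case True
    then obtain t where "n = c * t" by blast
    then have "ee n c = 1" unfolding ee_def using assms by (simp add: e_int)
    then show ?thesis using S True assms by simp
  next
    case False
    have "ee n c \<noteq> 1"
    proof
      assume "ee n c = 1"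
      then have "of_int n / of_int c \<in> (\<int>::real set)" unfolding ee_def e_eq_1 .
      then obtain t where "of_int n / of_int c = (of_int t :: real)" by (auto elim: Ints_cases)
      then have "n = c * t" using assms by (simp add: field_simps) (metis of_int_eq_iff of_int_mult)
      then show False using False by simp
    qed
    moreover have "(ee n c) ^ nat c = 1"
    proof -
      have "(ee n c) ^ nat c = ee (c * n) c" using assms by (simp only: ee_pow) simp
      also have "\<dots> = 1" using assms by (simp add: ee_def e_int)
      finally show ?thesis .
    qed
    ultimately show ?thesis using S False by (simp add: geometric_sum)
  qed
qed



lemma div_lt_aux: fixes x c d :: int assumes "c > 0" "x < c * d" shows "x div c < d"
proof (rule ccontr)
  assume "\<not> x div c < d"
  then have "c * d \<le> c * (x div c)" using assms by (intro mult_left_mono) auto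
  moreover have "c * (x div c) \<le> x" using assms
    by (metis add.commute cancel_comm_monoid_add_class.diff_cancel diff_ge_0_iff_ge minus_div_mult_eq_mod mult.commute pos_mod_sign)
  ultimately show False using assms by linarith
qed

lemma split_sum:
  fixes c d :: int assumes "c > 0" "d > 0"
  shows "(\<Sum>x\<in>{0..<c*d}. F x) = (\<Sum>r\<in>{0..<c}. \<Sum>j\<in>{0..<d}. F (r + c*j))"
proof -
  have bij: "bij_betw (\<lambda>(r,j). r + c*j) ({0..<c}\<times>{0..<d}) {0..<c*d}"
  proof (rule bij_betw_byWitness[where f'="\<lambda>x. (x mod c, x div c)"])
    show "\<forall>a\<in>{0..<c} \<times> {0..<d}. (\<lambda>x. (x mod c, x div c)) ((\<lambda>(r,j). r + c*j) a) = a"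
      by auto
    show "\<forall>a'\<in>{0..<c * d}. (\<lambda>(r,j). r + c*j) ((\<lambda>x. (x mod c, x div c)) a') = a'"
      by (auto simp: mult.commute)
    show "(\<lambda>(r, j). r + c * j) ` ({0..<c} \<times> {0..<d}) \<subseteq> {0..<c * d}"
    proof clarsimp
      fix r j assume "0 \<le> r" "r < c" "0 \<le> j" "j < d"
      then have "c * j \<le> c * (d - 1)" using assms by (intro mult_left_mono) auto
      then show "r + c * j < c * d" using \<open>r < c\<close> by (simp add: algebra_simps)
    qed
    show "(\<lambda>x. (x mod c, x div c)) ` {0..<c * d} \<subseteq> {0..<c} \<times> {0..<d}"
      using assms by (auto simp: div_lt_aux pos_imp_zdiv_nonneg_iff)
  qed
  have "(\<Sum>x\<in>{0..<c*d}. F x) = (\<Sum>(r,j)\<in>{0..<c}\<times>{0..<d}. F (r + c*j))"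
    proof -
    have "(\<Sum>(r,j)\<in>{0..<c}\<times>{0..<d}. F (r + c*j)) = (\<Sum>p\<in>{0..<c}\<times>{0..<d}. F ((\<lambda>(r,j). r + c*j) p))"
      by (rule sum.cong) auto
    then show ?thesis using sum.reindex_bij_betw[OF bij, of F] by simp
  qed
  also have "\<dots> = (\<Sum>r\<in>{0..<c}. \<Sum>j\<in>{0..<d}. F (r + c*j))"
    by (simp add: sum.cartesian_product)
  finally show ?thesis .
qed



lemma solve_cong:
  fixes c t w r q :: int
  assumes "[t * w = 1] (mod c)"
  shows "c dvd (t * r - q) \<longleftrightarrow> [r = w * q] (mod c)"
proof
  assume "c dvd (t * r - q)"
  then have h: "[t * r = q] (mod c)" by (simp add: cong_iff_dvd_diff)
  have "[w * (t * r) = w * q] (mod c)" using h by (rule cong_scalar_left)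
  moreover have "[w * (t * r) = r] (mod c)"
  proof -
    have "[(t * w) * r = 1 * r] (mod c)" using assms by (rule cong_scalar_right)
    then show ?thesis by (simp add: mult_ac)
  qed
  ultimately show "[r = w * q] (mod c)" by (meson cong_sym cong_trans)
next
  assume h: "[r = w * q] (mod c)"
  have "[t * r = t * (w * q)] (mod c)" using h by (rule cong_scalar_left)
  moreover have "[(t * w) * q = 1 * q] (mod c)" using assms by (rule cong_scalar_right)
  ultimately have "[t * r = q] (mod c)" by (simp add: mult_ac) (meson cong_trans)
  then show "c dvd (t * r - q)" by (simp add: cong_iff_dvd_diff)
qed

lemma inner:
  fixes d c u \<alpha> w p2 p3 :: int
  assumes d: "d > 0" and c: "c > 0" and w: "[u * \<alpha> * w = 1] (mod c)"
  shows "(\<Sum>x2\<in>{0..<d*c}. if (d*c) dvd (d*u*x2*\<alpha> - p3) then ee (-(x2*p2)) (d*c) else 0)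
       = (if d dvd p2 \<and> d dvd p3 then of_int d * ee (-(w*((p2*p3) div d^2))) c else 0)"
proof -
  define F where "F x2 = (if (d*c) dvd (d*u*x2*\<alpha> - p3) then ee (-(x2*p2)) (d*c) else 0)" for x2
  have "(\<Sum>x2\<in>{0..<d*c}. F x2) = (\<Sum>r\<in>{0..<c}. \<Sum>j\<in>{0..<d}. F (r + c*j))"
    using split_sum[OF c d, of F] by (simp add: mult.commute)
  also have "\<dots> = (\<Sum>r\<in>{0..<c}. \<Sum>j\<in>{0..<d}.
      if (d*c) dvd (d*u*r*\<alpha> - p3) then ee (-((r + c*j)*p2)) (d*c) else 0)"
  proof (intro sum.cong refl)
    fix r j
    have eq: "d*u*(r + c*j)*\<alpha> - p3 = (d*u*r*\<alpha> - p3) + (d*c)*(u*j*\<alpha>)" by (simp add: algebra_simps)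
    have "(d*c) dvd (d*u*(r + c*j)*\<alpha> - p3) \<longleftrightarrow> (d*c) dvd (d*u*r*\<alpha> - p3)"
      unfolding eq by (rule dvd_add_left_iff) simp
    then show "F (r + c*j) = (if (d*c) dvd (d*u*r*\<alpha> - p3) then ee (-((r + c*j)*p2)) (d*c) else 0)"
      unfolding F_def by simp
  qed
  finally have S: "(\<Sum>x2\<in>{0..<d*c}. F x2) = \<dots>" .
  show ?thesis
  proof (cases "d dvd p3")
    case False
    have "\<not> (d*c) dvd (d*u*r*\<alpha> - p3)" for r
    proof
      assume "(d*c) dvd (d*u*r*\<alpha> - p3)"
      then have h1: "d dvd (d*u*r*\<alpha> - p3)" by (meson dvd_mult_left)
      have h2: "d dvd d*u*r*\<alpha>" by (simp add: mult.assoc)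
      have "d dvd (d*u*r*\<alpha> - (d*u*r*\<alpha> - p3))" by (rule dvd_diff[OF h2 h1])
      then have "d dvd p3" by simp
      then show False using False by simp
    qed
    then show ?thesis using S False unfolding F_def by simp
  next
    case True
    then obtain q where q: "p3 = d * q" by blast
    define r0 where "r0 = (w * q) mod c"
    have r0: "r0 \<in> {0..<c}" unfolding r0_def using c by simp
    have cond: "(d*c) dvd (d*u*r*\<alpha> - p3) \<longleftrightarrow> r = r0" if "r \<in> {0..<c}" for r
    proof -
      have "d*u*r*\<alpha> - p3 = d * ((u*\<alpha>)*r - q)" using q by (simp add: algebra_simps)
      then have "(d*c) dvd (d*u*r*\<alpha> - p3) \<longleftrightarrow> c dvd ((u*\<alpha>)*r - q)" using d by simp
      also have "\<dots> \<longleftrightarrow> [r = w * q] (mod c)" using solve_cong[OF w] by simp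
      also have "\<dots> \<longleftrightarrow> r = r0" unfolding r0_def cong_def using that by simp
      finally show ?thesis .
    qed
    have "(\<Sum>r\<in>{0..<c}. \<Sum>j\<in>{0..<d}.
      if (d*c) dvd (d*u*r*\<alpha> - p3) then ee (-((r + c*j)*p2)) (d*c) else 0)
      = (\<Sum>r\<in>{0..<c}. if r = r0 then (\<Sum>j\<in>{0..<d}. ee (-((r + c*j)*p2)) (d*c)) else 0)"
      by (intro sum.cong refl) (simp add: cond)
    also have "\<dots> = (\<Sum>j\<in>{0..<d}. ee (-((r0 + c*j)*p2)) (d*c))"
      using r0 by (simp add: sum.delta')
    also have "\<dots> = (\<Sum>j\<in>{0..<d}. ee (-(r0*p2)) (d*c) * ee (j * (-p2)) d)"
    proof (intro sum.cong refl)
      fix j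
      have eq: "-((r0 + c*j)*p2) = -(r0*p2) + c * (j * (-p2))" by (simp add: algebra_simps)
      have "ee (-((r0 + c*j)*p2)) (d*c) = ee (-(r0*p2) + c * (j * (-p2))) (d*c)" by (simp only: eq)
      also have "\<dots> = ee (-(r0*p2)) (d*c) * ee (c * (j * (-p2))) (d*c)" by (rule ee_add)
      also have "\<dots> = ee (-(r0*p2)) (d*c) * ee (c * (j * (-p2))) (c*d)" by (simp only: mult.commute[of d c])
      also have "ee (c * (j * (-p2))) (c*d) = ee (j * (-p2)) d" using c by (intro ee_scale) simp
      finally show "ee (-((r0 + c*j)*p2)) (d*c) = ee (-(r0*p2)) (d*c) * ee (j * (-p2)) d" .
    qed
    also have "\<dots> = ee (-(r0*p2)) (d*c) * (if d dvd p2 then of_int d else 0)"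
      using geom[of d "-p2"] d by (simp add: sum_distrib_left[symmetric])
    finally have T: "(\<Sum>x2\<in>{0..<d*c}. F x2) = ee (-(r0*p2)) (d*c) * (if d dvd p2 then of_int d else 0)"
      using S by simp
    show ?thesis
    proof (cases "d dvd p2")
      case False then show ?thesis using T True unfolding F_def by simp
    next
      case True2: True
      then obtain sp where sp: "p2 = d * sp" by blast
      have "ee (-(r0*p2)) (d*c) = ee (d * (-(r0* sp))) (d*c)" using sp by (simp add: algebra_simps)
      also have "\<dots> = ee (-(r0* sp)) c" using d by (intro ee_scale) simp
      also have "\<dots> = ee (-(w*((p2*p3) div d^2))) c"
      proof (rule ee_cong)
        have e1: "(p2*p3) div d^2 = sp * q" using sp q d by (simp add: power2_eq_square mult_ac)
        have "[r0 = w * q] (mod c)" unfolding r0_def cong_def by simp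
        then have "[-(r0* sp) = -((w*q)* sp)] (mod c)" by (intro cong_minus_minus_iff[THEN iffD2] cong_scalar_right)
        then show "[-(r0* sp) = -(w*((p2*p3) div d^2))] (mod c)" using e1 by (simp add: mult_ac)
      qed
      finally show ?thesis using T True True2 unfolding F_def by (simp add: mult.commute)
    qed
  qed
qed



lemma inv_unique:
  fixes a v v' c :: int
  assumes "[a * v = 1] (mod c)" "[a * v' = 1] (mod c)"
  shows "[v = v'] (mod c)"
proof -
  have "[v * (a * v') = v * 1] (mod c)" using assms(2) by (rule cong_scalar_left)
  moreover have "[(a * v) * v' = 1 * v'] (mod c)" using assms(1) by (rule cong_scalar_right)
  ultimately show ?thesis by (simp add: mult_ac) (meson cong_sym cong_trans)
qed

lemma mulinv_cong:
  fixes a b u c :: int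
  assumes "[a * b = 1] (mod c)"
  shows "[(-b) * ((-a*u) mod c) = u] (mod c)"
proof -
  have "[(-a*u) mod c = -a*u] (mod c)" by (simp add: cong_def)
  then have "[(-b)*((-a*u) mod c) = (-b)*(-a*u)] (mod c)" by (rule cong_scalar_left)
  moreover have "(-b)*(-a*u) = (a*b)*u" by (simp add: mult_ac)
  moreover have "[(a*b)*u = 1*u] (mod c)" using assms by (rule cong_scalar_right)
  ultimately show ?thesis by (metis cong_trans mult_1)
qed

definition U :: "int \<Rightarrow> int set" where "U c = {u\<in>{0..<c}. coprime u c}"

lemma phi_bij:
  fixes a b c :: int
  assumes c: "c > 0" and ab: "[a * b = 1] (mod c)"
  shows "bij_betw (\<lambda>u. (-a*u) mod c) (U c) (U c)"
proof (rule bij_betw_byWitness[where f'="\<lambda>v. (-b* v) mod c"])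
  have ba: "[b * a = 1] (mod c)" using ab by (simp add: mult.commute)
  have "coprime (a * b) c" using cong_imp_coprime[OF cong_sym[OF ab]] by simp
  then have ca: "coprime a c" and cb: "coprime b c" by simp_all
  show "\<forall>u\<in>U c. (\<lambda>v. (-b* v) mod c) ((\<lambda>u. (-a*u) mod c) u) = u"
  proof
    fix u assume "u \<in> U c"
    then have "u \<in> {0..<c}" unfolding U_def by auto
    then show "(\<lambda>v. (-b* v) mod c) ((\<lambda>u. (-a*u) mod c) u) = u"
      using mulinv_cong[OF ab, of u] unfolding cong_def by simp
  qed
  show "\<forall>u\<in>U c. (\<lambda>u. (-a*u) mod c) ((\<lambda>v. (-b* v) mod c) u) = u"
  proof
    fix u assume "u \<in> U c"
    then have "u \<in> {0..<c}" unfolding U_def by auto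
    then show "(\<lambda>u. (-a*u) mod c) ((\<lambda>v. (-b* v) mod c) u) = u"
      using mulinv_cong[OF ba, of u] unfolding cong_def by simp
  qed
  show "(\<lambda>u. (-a*u) mod c) ` U c \<subseteq> U c"
    using c ca unfolding U_def by auto
  show "(\<lambda>v. (-b* v) mod c) ` U c \<subseteq> U c"
    using c cb unfolding U_def by auto
qed



lemma kl:
  fixes c \<alpha> ab p1 b :: int
  assumes c: "c > 0" and ab: "[\<alpha> * ab = 1] (mod c)"
  shows "kloosterman (p1*ab) b c =
    (\<Sum>u\<in>U c. ee (-(u*p1)) c * ee (-((SOME w. [u*\<alpha>* w = 1] (mod c)) * b)) c)"
proof -
  define K where "K v = ee (p1*ab* v + b*(SOME v'. [v * v' = 1] (mod c))) c" for v
  have "coprime (\<alpha> * ab) c" using cong_imp_coprime[OF cong_sym[OF ab]] by simp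
  then have ca: "coprime \<alpha> c" by simp
  have "kloosterman (p1*ab) b c = sum K (U c)" unfolding kloosterman_def U_def ee_def K_def by simp
  also have "\<dots> = (\<Sum>u\<in>U c. K ((-\<alpha>*u) mod c))"
    using sum.reindex_bij_betw[OF phi_bij[OF c ab], of K] by simp
  also have "\<dots> = (\<Sum>u\<in>U c. ee (-(u*p1)) c * ee (-((SOME w. [u*\<alpha>* w = 1] (mod c)) * b)) c)"
  proof (rule sum.cong[OF refl])
    fix u assume "u \<in> U c"
    then have cu: "coprime u c" unfolding U_def by simp
    define w where "w = (SOME w. [u*\<alpha>* w = 1] (mod c))"
    have "\<exists>w. [u*\<alpha>* w = 1] (mod c)" using cu ca by (intro cong_solve_coprime_int) simp
    then have w: "[u*\<alpha>* w = 1] (mod c)" unfolding w_def by (rule someI_ex)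
    define v where "v = (-\<alpha>*u) mod c"
    have vv: "[v = -\<alpha>*u] (mod c)" unfolding v_def by (simp add: cong_def)
    have "[v * (-w) = (-\<alpha>*u)*(-w)] (mod c)" using vv by (rule cong_scalar_right)
    moreover have "(-\<alpha>*u)*(-w) = u*\<alpha>* w" by (simp add: mult_ac)
    ultimately have vw: "[v * (-w) = 1] (mod c)" using w by (metis cong_trans)
    then have iv: "[v * (SOME v'. [v * v' = 1] (mod c)) = 1] (mod c)" by (rule someI)
    have inv: "[(SOME v'. [v * v' = 1] (mod c)) = -w] (mod c)" by (rule inv_unique[OF iv vw])
    have c1: "[p1*ab* v = -(u*p1)] (mod c)"
    proof -
      have "[p1*ab* v = p1*ab*(-\<alpha>*u)] (mod c)" using vv by (rule cong_scalar_left)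
      moreover have "p1*ab*(-\<alpha>*u) = (\<alpha>*ab)*(-(u*p1))" by (simp add: mult_ac)
      moreover have "[(\<alpha>*ab)*(-(u*p1)) = 1*(-(u*p1))] (mod c)" using ab by (rule cong_scalar_right)
      ultimately show ?thesis by (metis cong_trans mult_1)
    qed
    have c2: "[b*(SOME v'. [v * v' = 1] (mod c)) = -(w*b)] (mod c)"
    proof -
      have "[b*(SOME v'. [v * v' = 1] (mod c)) = b*(-w)] (mod c)" using inv by (rule cong_scalar_left)
      then show ?thesis by (simp add: mult.commute)
    qed
    have "K v = ee (-(u*p1) + -(w*b)) c" unfolding K_def by (rule ee_cong) (rule cong_add[OF c1 c2])
    then show "K ((-\<alpha>*u) mod c) = ee (-(u*p1)) c * ee (-(w*b)) c"
      unfolding v_def by (simp only: ee_add)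
  qed
  finally show ?thesis .
qed



lemma step1:
  fixes k \<alpha> p1 p2 p3 :: int
  assumes k: "k \<ge> 1"
  shows "Asum p1 p2 p3 \<alpha> k = of_int k * (\<Sum>x1\<in>{0..<k}. \<Sum>x2\<in>{0..<k}.
     if k dvd (x1*x2*\<alpha> - p3) then ee (-(x1*p1) - x2*p2) k else 0)"
proof -
  have inner: "(\<Sum>x3\<in>{0..<k}. ee (x1 * x2 * x3 * \<alpha> - x1 * p1 - x2 * p2 - x3 * p3) k)
     = of_int k * (if k dvd (x1*x2*\<alpha> - p3) then ee (-(x1*p1) - x2*p2) k else 0)" for x1 x2
  proof -
    have "(\<Sum>x3\<in>{0..<k}. ee (x1 * x2 * x3 * \<alpha> - x1 * p1 - x2 * p2 - x3 * p3) k)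
      = (\<Sum>x3\<in>{0..<k}. ee (-(x1*p1) - x2*p2) k * ee (x3 * (x1*x2*\<alpha> - p3)) k)"
    proof (rule sum.cong[OF refl])
      fix x3
      have eq: "x1 * x2 * x3 * \<alpha> - x1 * p1 - x2 * p2 - x3 * p3 = (-(x1*p1) - x2*p2) + x3 * (x1*x2*\<alpha> - p3)"
        by (simp add: algebra_simps)
      show "ee (x1 * x2 * x3 * \<alpha> - x1 * p1 - x2 * p2 - x3 * p3) k = ee (-(x1*p1) - x2*p2) k * ee (x3 * (x1*x2*\<alpha> - p3)) k"
        by (simp only: eq ee_add)
    qed
    also have "\<dots> = ee (-(x1*p1) - x2*p2) k * (\<Sum>x3\<in>{0..<k}. ee (x3 * (x1*x2*\<alpha> - p3)) k)"
      by (simp add: sum_distrib_left)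
    also have "\<dots> = of_int k * (if k dvd (x1*x2*\<alpha> - p3) then ee (-(x1*p1) - x2*p2) k else 0)"
      using geom[OF k] by simp
    finally show ?thesis .
  qed
  have "Asum p1 p2 p3 \<alpha> k = (\<Sum>x1\<in>{0..<k}. \<Sum>x2\<in>{0..<k}. \<Sum>x3\<in>{0..<k}.
        ee (x1 * x2 * x3 * \<alpha> - x1 * p1 - x2 * p2 - x3 * p3) k)"
    unfolding Asum_def ee_def by simp
  also have "\<dots> = (\<Sum>x1\<in>{0..<k}. \<Sum>x2\<in>{0..<k}.
     of_int k * (if k dvd (x1*x2*\<alpha> - p3) then ee (-(x1*p1) - x2*p2) k else 0))"
    by (simp only: inner)
  also have "\<dots> = of_int k * (\<Sum>x1\<in>{0..<k}. \<Sum>x2\<in>{0..<k}.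
     if k dvd (x1*x2*\<alpha> - p3) then ee (-(x1*p1) - x2*p2) k else 0)"
    by (simp only: sum_distrib_left)
  finally show ?thesis .
qed

lemma group_gcd:
  fixes k :: int
  assumes k: "k \<ge> 1"
  shows "(\<Sum>x1\<in>{0..<k}. H x1) = (\<Sum>d\<in>{d. d > 0 \<and> d dvd k}. \<Sum>u\<in>U (k div d). H (d*u))"
proof -
  have fT: "finite {d. d > 0 \<and> d dvd k}"
    by (rule finite_subset[of _ "{1..k}"]) (use k in \<open>auto dest: zdvd_imp_le\<close>)
  have sub: "(\<lambda>x. gcd x k) ` {0..<k} \<subseteq> {d. d > 0 \<and> d dvd k}" using k by auto
  have "(\<Sum>x1\<in>{0..<k}. H x1) = (\<Sum>d\<in>{d. d > 0 \<and> d dvd k}. \<Sum>x\<in>{x. x \<in> {0..<k} \<and> gcd x k = d}. H x)"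
    using sum.group[OF _ fT sub, of H] by simp
  also have "\<dots> = (\<Sum>d\<in>{d. d > 0 \<and> d dvd k}. \<Sum>u\<in>U (k div d). H (d*u))"
  proof (rule sum.cong[OF refl])
    fix d assume "d \<in> {d. d > 0 \<and> d dvd k}"
    then have d: "d > 0" and "d dvd k" by auto
    define c where "c = k div d"
    have kdc: "k = d * c" unfolding c_def using \<open>d dvd k\<close> by simp
    have cpos: "c > 0" using k d kdc by (metis pos_imp_zdiv_pos_iff c_def zdvd_imp_le \<open>d dvd k\<close> zero_less_one order_less_le_trans) 
    have seteq: "{x. x \<in> {0..<k} \<and> gcd x k = d} = (\<lambda>u. d*u) ` U c"
    proof
      show "{x. x \<in> {0..<k} \<and> gcd x k = d} \<subseteq> (\<lambda>u. d*u) ` U c"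
      proof
        fix x assume "x \<in> {x. x \<in> {0..<k} \<and> gcd x k = d}"
        then have x: "0 \<le> x" "x < k" "gcd x k = d" by auto
        then have "d dvd x" by (metis gcd_dvd1)
        then obtain u where u: "x = d * u" by blast
        have "d * gcd u c = gcd (d*u) (d*c)" using d gcd_mult_distrib_int[of d u c] by simp
        then have "d * gcd u c = d * 1" using x u kdc by simp
        then have "gcd u c = 1" using d by simp
        moreover have "0 \<le> u" using x u d by (simp add: zero_le_mult_iff)
        moreover have "u < c" using x u kdc d by simp
        ultimately have "u \<in> U c" unfolding U_def by (simp add: coprime_iff_gcd_eq_1)
        then show "x \<in> (\<lambda>u. d*u) ` U c" using u by blast
      qed
      show "(\<lambda>u. d*u) ` U c \<subseteq> {x. x \<in> {0..<k} \<and> gcd x k = d}"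
      proof
        fix x assume "x \<in> (\<lambda>u. d*u) ` U c"
        then obtain u where u: "x = d*u" "u \<in> U c" by blast
        then have "0 \<le> u" "u < c" "coprime u c" unfolding U_def by auto
        have "gcd (d*u) (d*c) = d * gcd u c" using d gcd_mult_distrib_int[of d u c] by simp
        then have "gcd x k = d" using u \<open>coprime u c\<close> kdc by simp
        moreover have "0 \<le> x" "x < k" using u \<open>0 \<le> u\<close> \<open>u < c\<close> d kdc by simp_all
        ultimately show "x \<in> {x. x \<in> {0..<k} \<and> gcd x k = d}" by simp
      qed
    qed
    have "inj_on (\<lambda>u. d*u) (U c)" using d by (auto intro: inj_onI)
    then show "(\<Sum>x\<in>{x. x \<in> {0..<k} \<and> gcd x k = d}. H x) = (\<Sum>u\<in>U (k div d). H (d*u))"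
      unfolding seteq c_def[symmetric] by (simp add: sum.reindex)
  qed
  finally show ?thesis .
qed



theorem mainTheorem9:
  fixes k \<alpha> p1 p2 p3 :: int and abar :: "int \<Rightarrow> int"
  assumes "k \<ge> 1" and "coprime \<alpha> k"
    and "\<And>f. f > 0 \<Longrightarrow> f dvd gcd (gcd p2 p3) k \<Longrightarrow> [\<alpha> * abar f = 1] (mod (k div f))"
  shows "Asum p1 p2 p3 \<alpha> k =
    of_int k * (\<Sum>f\<in>{f. f > 0 \<and> f dvd gcd (gcd p2 p3) k}.
       of_int f * kloosterman (p1 * abar f) ((p2 * p3) div (f^2)) (k div f))"
proof -
  have k: "k \<ge> 1" by fact
  define T where "T = {d::int. d > 0 \<and> d dvd k}"
  define P where "P d \<longleftrightarrow> d dvd p2 \<and> d dvd p3" for d :: int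
  define X where "X d = of_int d * kloosterman (p1 * abar d) ((p2 * p3) div (d^2)) (k div d)" for d
  define H where "H x1 = (\<Sum>x2\<in>{0..<k}. if k dvd (x1*x2*\<alpha> - p3) then ee (-(x1*p1) - x2*p2) k else 0)" for x1
  have fT: "finite T" unfolding T_def
    by (rule finite_subset[of _ "{1..k}"]) (use k in \<open>auto dest: zdvd_imp_le\<close>)
  have "Asum p1 p2 p3 \<alpha> k = of_int k * (\<Sum>x1\<in>{0..<k}. H x1)" unfolding H_def by (rule step1[OF k])
  also have "(\<Sum>x1\<in>{0..<k}. H x1) = (\<Sum>d\<in>T. \<Sum>u\<in>U (k div d). H (d*u))"
    unfolding T_def by (rule group_gcd[OF k])
  also have "\<dots> = (\<Sum>d\<in>T. if P d then X d else 0)"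
  proof (rule sum.cong[OF refl])
    fix d assume "d \<in> T"
    then have d: "d > 0" and "d dvd k" unfolding T_def by auto
    define c where "c = k div d"
    have kdc: "k = d * c" unfolding c_def using \<open>d dvd k\<close> by simp
    have cpos: "c > 0" using k d kdc by (metis pos_imp_zdiv_pos_iff c_def zdvd_imp_le \<open>d dvd k\<close> zero_less_one order_less_le_trans)
    define b where "b = (p2 * p3) div (d^2)"
    define W where "W u = (SOME w. [u*\<alpha>*w = 1] (mod c))" for u
    have Hu: "H (d*u) = ee (-(u*p1)) c * (if P d then of_int d * ee (-(W u * b)) c else 0)"
      if "u \<in> U c" for u
    proof -
      have cu: "coprime u c" using that unfolding U_def by simp
      have ca: "coprime \<alpha> c" using \<open>coprime \<alpha> k\<close> kdc by simp
      have "\<exists>w. [u*\<alpha>*w = 1] (mod c)" using cu ca by (intro cong_solve_coprime_int) simp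
      then have w: "[u*\<alpha>*W u = 1] (mod c)" unfolding W_def by (rule someI_ex)
      have "H (d*u) = (\<Sum>x2\<in>{0..<k}. ee (-(d*u*p1)) k *
             (if k dvd (d*u*x2*\<alpha> - p3) then ee (-(x2*p2)) k else 0))"
        unfolding H_def
      proof (intro sum.cong refl)
        fix x2
        have "ee (-(d*u*p1) - x2*p2) k = ee (-(d*u*p1)) k * ee (-(x2*p2)) k"
          using ee_add[of "-(d*u*p1)" "-(x2*p2)" k] by simp
        then show "(if k dvd (d*u*x2*\<alpha> - p3) then ee (-(d*u*p1) - x2*p2) k else 0) =
          ee (-(d*u*p1)) k * (if k dvd (d*u*x2*\<alpha> - p3) then ee (-(x2*p2)) k else 0)" by simp
      qed
      also have "\<dots> = ee (-(d*u*p1)) k * (\<Sum>x2\<in>{0..<k}.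
             (if k dvd (d*u*x2*\<alpha> - p3) then ee (-(x2*p2)) k else 0))"
        by (simp add: sum_distrib_left)
      also have "(\<Sum>x2\<in>{0..<k}. (if k dvd (d*u*x2*\<alpha> - p3) then ee (-(x2*p2)) k else 0))
          = (if P d then of_int d * ee (-(W u * b)) c else 0)"
        unfolding kdc P_def b_def by (rule inner[OF d cpos w])
      also have "ee (-(d*u*p1)) k = ee (-(u*p1)) c"
      proof -
        have "ee (-(d*u*p1)) k = ee (d * (-(u*p1))) (d * c)" using kdc by (simp add: algebra_simps)
        also have "\<dots> = ee (-(u*p1)) c" using d by (intro ee_scale) simp
        finally show ?thesis .
      qed
      finally show ?thesis .
    qed
    have "(\<Sum>u\<in>U (k div d). H (d*u)) = (\<Sum>u\<in>U c. ee (-(u*p1)) c * (if P d then of_int d * ee (-(W u * b)) c else 0))"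
      unfolding c_def[symmetric] by (rule sum.cong[OF refl]) (rule Hu)
    also have "\<dots> = (if P d then X d else 0)"
    proof (cases "P d")
      case True
      then have "d dvd gcd (gcd p2 p3) k" unfolding P_def using \<open>d dvd k\<close> by simp
      then have ab: "[\<alpha> * abar d = 1] (mod c)" unfolding c_def using assms(3) d by simp
      have "(\<Sum>u\<in>U c. ee (-(u*p1)) c * (of_int d * ee (-(W u * b)) c))
          = of_int d * (\<Sum>u\<in>U c. ee (-(u*p1)) c * ee (-(W u * b)) c)"
        by (simp add: sum_distrib_left mult_ac)
      also have "(\<Sum>u\<in>U c. ee (-(u*p1)) c * ee (-(W u * b)) c) = kloosterman (p1 * abar d) b c"
        unfolding W_def by (rule kl[OF cpos ab, symmetric])
      finally show ?thesis using True unfolding X_def b_def c_def by simp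
    next
      case False then show ?thesis by simp
    qed
    finally show "(\<Sum>u\<in>U (k div d). H (d*u)) = (if P d then X d else 0)" .
  qed
  also have "\<dots> = (\<Sum>d\<in>{d\<in>T. P d}. X d)" using fT by (simp add: sum.inter_filter)
  also have "{d\<in>T. P d} = {f. f > 0 \<and> f dvd gcd (gcd p2 p3) k}" unfolding T_def P_def by auto
  finally show ?thesis unfolding X_def .
qed

end
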